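(* For a glass relaxing isothermally at fixed medium temperature $T_0$ and pressure $P_0$, with $T_0<T_{0\text{g}}$ and $S>S_{\text{SCL}}$, the enthalpy satisfies $H(T_0,P_0,t)>H_{\text{SCL}}(T_0,P_0)$.
   Context: The system is in contact with a large equilibrium medium at fixed $T_0,P_0$ and is in internal equilibrium with instantaneous temperature $T(t)$ defined by $1/T=\partial S/\partial E$, where $S(E,V,\boldsymbol{\xi})$ is the entropy as a function of energy, volume and internal variables. Below $T_{0\text{g}}$ the system is out of equilibrium with the medium, and during relaxation $T(t)>T_0$, with $T(t)\to T_0$ from above. The enthalpy is $H=E+P_0V$, and for an isobaric process $dH=d_{\text{e}}Q=T_0\,d_{\text{e}}S$, where $d_{\text{e}}Q$, $d_{\text{e}}S$ are the heat and entropy exchanged with the medium. The second law gives $[T_0-T(t)]d_{\text{e}}S(t)\ge0$. $H_{\text{SCL}}(T_0,P_0)$ and $S_{\text{SCL}}$ are the enthalpy and entropy of the equilibrium supercooled liquid at $T_0,P_0$; $T_{0\text{g}}$ is the temperature below which the system falls out of equilibrium on the observation time scale. *)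

theory Defs
  imports Complex_Main
begin

end

theory Submission
  imports Defs
begin

theorem theorem4:
  fixes T0 P0 T0g H_SCL S_SCL :: real
    and H S T deS diS :: "real \<Rightarrow> real"
    and t :: real
  assumes T0_pos: "T0 > 0"
    and below_glass: "T0 < T0g"
    and hot: "\<forall>u\<ge>0. T u > T0"
    and T_lim: "(T \<longlongrightarrow> T0) at_top"
    and dH: "\<forall>u\<ge>0. (H has_real_derivative T0 * deS u) (at u within {0..})"
    and dS: "\<forall>u\<ge>0. (S has_real_derivative deS u + diS u) (at u within {0..})"
    and second_law_i: "\<forall>u\<ge>0. diS u \<ge> 0"
    and second_law_e: "\<forall>u\<ge>0. (T0 - T u) * deS u \<ge> 0"
    and H_lim: "(H \<longlongrightarrow> H_SCL) at_top"
    and S_lim: "(S \<longlongrightarrow> S_SCL) at_top"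
    and t_nonneg: "t \<ge> 0"
    and S_gt: "S t > S_SCL"
  shows "H t > H_SCL"
proof -
  define G where "G u = H u - T0 * S u" for u
  have dG: "(G has_real_derivative - (T0 * diS u)) (at u within {0..})" if "u \<ge> 0" for u
  proof -
    have h1: "(H has_real_derivative T0 * deS u) (at u within {0..})" using dH that by blast
    have h2: "(S has_real_derivative deS u + diS u) (at u within {0..})" using dS that by blast
    have "((\<lambda>u. H u - T0 * S u) has_real_derivative T0 * deS u - T0 * (deS u + diS u)) (at u within {0..})"
      by (rule DERIV_diff[OF h1 DERIV_cmult[OF h2]])
    moreover have "T0 * deS u - T0 * (deS u + diS u) = - (T0 * diS u)" by algebra
    ultimately show ?thesis unfolding G_def[abs_def] by simp
  qed
  have mono: "G s \<le> G t" if "s \<ge> t" for s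
  proof (rule DERIV_nonpos_imp_decreasing_open[OF that])
    fix x assume x: "t < x" "x < s"
    have x0: "x > 0" using t_nonneg x(1) by linarith
    have "(G has_real_derivative - (T0 * diS x)) (at x within {0<..})"
      by (rule DERIV_subset[OF dG]) (use x0 in auto)
    hence d: "(G has_real_derivative - (T0 * diS x)) (at x)"
      using x0 at_within_open[of x "{0<..}"] by simp
    have "diS x \<ge> 0" using second_law_i x0 by simp
    hence "- (T0 * diS x) \<le> 0" using T0_pos by simp
    with d show "\<exists>y. DERIV G x :> y \<and> y \<le> 0" by blast
  next
    have "continuous_on {0..} G"
      unfolding continuous_on_eq_continuous_within
    proof
      fix x :: real assume "x \<in> {0..}"
      hence "x \<ge> 0" by simp
      from DERIV_continuous[OF dG[OF this]] show "continuous (at x within {0..}) G" .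
    qed
    moreover have "{t..s} \<subseteq> {0..}" using t_nonneg by auto
    ultimately show "continuous_on {t..s} G" by (rule continuous_on_subset)
  qed
  have Glim: "(G \<longlongrightarrow> H_SCL - T0 * S_SCL) at_top"
    unfolding G_def[abs_def] by (intro tendsto_diff tendsto_mult_left H_lim S_lim)
  have ev: "eventually (\<lambda>s. G s \<le> G t) at_top"
    unfolding eventually_at_top_linorder using mono by blast
  have "H_SCL - T0 * S_SCL \<le> G t"
    by (rule tendsto_upperbound[OF Glim ev]) simp
  hence "H t \<ge> H_SCL + T0 * (S t - S_SCL)" unfolding G_def by (simp add: algebra_simps)
  moreover have "T0 * (S t - S_SCL) > 0" using T0_pos S_gt by simp
  ultimately show ?thesis by linarith
qed

end
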